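(* Let $C>4$ be a constant. Then every Nash equilibrium graph $G$ of the sum network creation game with $n$ players and $\alpha<n/C$ is $(5,\epsilon)$-distance-almost-uniform for $\epsilon=\frac45\left(1+\frac1C\right)$.
   Context: Sum network creation game: players $V=\{1,\dots,n\}$, parameter $\alpha>0$; a strategy of $u$ is $s_u\subseteq V\setminus\{u\}$; $G_s$ has an edge $uv$ whenever $v\in s_u$ or $u\in s_v$; the cost of $u$ is $\alpha|s_u|+\sum_{v\ne u}d_{G_s}(u,v)$. A Nash equilibrium graph is $G_s$ for $s$ from which no player can strictly lower his cost unilaterally. For a graph $G$ on $n$ vertices and $v\in V(G)$, $A_s(v)$ is the set of vertices at distance exactly $s$ from $v$. $G$ is $(k,\epsilon)$-distance-almost-uniform if there exists $r$ such that $\max_{i=0}^{k-1}|A_{r+i}(u)|\ge n(1-\epsilon)$ for all $u\in V(G)$. *)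

theory Defs
  imports "HOL-Analysis.Analysis" "HOL-Library.Extended_Real"
begin

definition edge_rel :: "'a set \<Rightarrow> ('a \<Rightarrow> 'a \<Rightarrow> bool) \<Rightarrow> ('a \<times> 'a) set" where
  "edge_rel V E = {(u, v). u \<in> V \<and> v \<in> V \<and> E u v}"

definition gdist :: "'a set \<Rightarrow> ('a \<Rightarrow> 'a \<Rightarrow> bool) \<Rightarrow> 'a \<Rightarrow> 'a \<Rightarrow> enat" where
  "gdist V E u v =
     (if \<exists>k. (u, v) \<in> edge_rel V E ^^ k
      then enat (LEAST k. (u, v) \<in> edge_rel V E ^^ k) else \<infinity>)"

definition sphere :: "'a set \<Rightarrow> ('a \<Rightarrow> 'a \<Rightarrow> bool) \<Rightarrow> nat \<Rightarrow> 'a \<Rightarrow> 'a set" where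
  "sphere V E s v = {w \<in> V. gdist V E v w = enat s}"

definition distance_almost_uniform ::
    "'a set \<Rightarrow> ('a \<Rightarrow> 'a \<Rightarrow> bool) \<Rightarrow> nat \<Rightarrow> real \<Rightarrow> bool" where
  "distance_almost_uniform V E k eps \<longleftrightarrow>
     (\<exists>r::nat. \<forall>u\<in>V.
        real (Max ((\<lambda>i. card (sphere V E (r + i) u)) ` {..<k})) \<ge> real (card V) * (1 - eps))"

definition players :: "nat \<Rightarrow> nat set" where
  "players n = {1..n}"

definition game_edge :: "(nat \<Rightarrow> nat set) \<Rightarrow> nat \<Rightarrow> nat \<Rightarrow> bool" where
  "game_edge s u v \<longleftrightarrow> v \<in> s u \<or> u \<in> s v"

definition valid_profile :: "nat \<Rightarrow> (nat \<Rightarrow> nat set) \<Rightarrow> bool" where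
  "valid_profile n s \<longleftrightarrow> (\<forall>u\<in>players n. s u \<subseteq> players n - {u})"

definition player_cost :: "nat \<Rightarrow> real \<Rightarrow> (nat \<Rightarrow> nat set) \<Rightarrow> nat \<Rightarrow> ereal" where
  "player_cost n \<alpha> s u =
     ereal (\<alpha> * real (card (s u)))
     + (\<Sum>v\<in>players n - {u}. ereal_of_enat (gdist (players n) (game_edge s) u v))"

definition nash_equilibrium :: "nat \<Rightarrow> real \<Rightarrow> (nat \<Rightarrow> nat set) \<Rightarrow> bool" where
  "nash_equilibrium n \<alpha> s \<longleftrightarrow> valid_profile n s \<and>
     (\<forall>u\<in>players n. \<forall>t. t \<subseteq> players n - {u} \<longrightarrow>
        player_cost n \<alpha> s u \<le> player_cost n \<alpha> (s(u := t)) u)"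

end

theory Submission imports Defs begin

lemma gd_le: "(u,v) \<in> edge_rel V E ^^ k \<Longrightarrow> gdist V E u v \<le> enat k"
  unfolding gdist_def by (auto intro: Least_le)

lemma gd_eq: "gdist V E u v = enat k \<Longrightarrow> (u,v) \<in> edge_rel V E ^^ k"
  unfolding gdist_def by (auto split: if_splits intro: LeastI)

lemma gd_refl: "gdist V E u u = 0"
proof -
  have "(u,u) \<in> edge_rel V E ^^ 0" by simp
  then have "gdist V E u u \<le> enat 0" by (rule gd_le)
  then show ?thesis by (metis le_zero_eq zero_enat_def)
qed

lemma relpow_sym:
  assumes "\<And>x y. (x,y)\<in>R \<Longrightarrow> (y,x)\<in>R"
  shows "(u,v) \<in> R^^k \<Longrightarrow> (v,u) \<in> R^^k"
proof (induction k arbitrary: v)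
  case 0 then show ?case by simp
next
  case (Suc k)
  from Suc.prems obtain y where "(u,y) \<in> R^^k" "(y,v) \<in> R" by (rule relpow_Suc_E)
  then show ?case using Suc.IH assms by (blast intro: relpow_Suc_I2)
qed

lemma edge_rel_sym:
  assumes "\<And>x y. E x y \<Longrightarrow> E y x"
  shows "(x,y) \<in> edge_rel V E \<Longrightarrow> (y,x) \<in> edge_rel V E"
  using assms unfolding edge_rel_def by auto

lemma gd_sym:
  assumes "\<And>x y. E x y \<Longrightarrow> E y x"
  shows "gdist V E u v = gdist V E v u"
proof -
  have sy: "(a,b) \<in> edge_rel V E ^^ k \<Longrightarrow> (b,a) \<in> edge_rel V E ^^ k" for a b k
    by (rule relpow_sym[OF edge_rel_sym[OF assms]])
  have "(\<exists>k. (u, v) \<in> edge_rel V E ^^ k) = (\<exists>k. (v, u) \<in> edge_rel V E ^^ k)"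
    using sy by blast
  moreover have "(LEAST k. (u, v) \<in> edge_rel V E ^^ k) = (LEAST k. (v, u) \<in> edge_rel V E ^^ k)"
    using sy by metis
  ultimately show ?thesis unfolding gdist_def by simp
qed

lemma relpow_mono': fixes R :: "('a\<times>'a) set" shows "R \<subseteq> R' \<Longrightarrow> (x,y) \<in> R^^k \<Longrightarrow> (x,y) \<in> R'^^k"
proof (induction k arbitrary: y)
  case 0 then show ?case by simp
next
  case (Suc k)
  from Suc.prems(2) obtain z where "(x,z) \<in> R^^k" "(z,y) \<in> R" by (rule relpow_Suc_E)
  then show ?case using Suc.IH Suc.prems(1) by (blast intro: relpow_Suc_I)
qed

lemma gd_mono:
  assumes "\<And>x y. E x y \<Longrightarrow> E' x y" and "gdist V E u v \<le> enat k"
  shows "gdist V E' u v \<le> enat k"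
proof -
  obtain k' where k': "gdist V E u v = enat k'" "k' \<le> k" using assms(2)
    by (cases "gdist V E u v") auto
  have "edge_rel V E \<subseteq> edge_rel V E'" using assms(1) unfolding edge_rel_def by auto
  then have "gdist V E' u v \<le> enat k'" using gd_eq[OF k'(1)] relpow_mono' gd_le by metis
  then show ?thesis using k'(2) order_trans by fastforce
qed

lemma gd_step:
  assumes "(u,c) \<in> edge_rel V E" and "gdist V E c z \<le> enat k"
  shows "gdist V E u z \<le> enat (Suc k)"
proof -
  obtain k' where k': "gdist V E c z = enat k'" "k' \<le> k" using assms(2)
    by (cases "gdist V E c z") auto
  have "gdist V E u z \<le> enat (Suc k')"
    by (rule gd_le, rule relpow_Suc_I2[OF assms(1) gd_eq[OF k'(1)]])
  then show ?thesis using k'(2) order_trans by fastforce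
qed

lemma ge_sym: "game_edge s x y \<Longrightarrow> game_edge s y x" unfolding game_edge_def by auto

lemma fin_players: "finite (players n)" by (simp add: players_def)

lemma NE_conn:
  assumes ne: "nash_equilibrium n \<alpha> s" and u: "u \<in> players n" and v: "v \<in> players n"
  shows "gdist (players n) (game_edge s) u v \<noteq> \<infinity>"
proof
  assume inf: "gdist (players n) (game_edge s) u v = \<infinity>"
  have "u \<noteq> v" using inf gd_refl[of "players n" "game_edge s" u] by auto
  define t where "t = players n - {u}"
  define s' where "s' = s(u := t)"
  have c1: "player_cost n \<alpha> s u = \<infinity>"
  proof -
    have "(\<Sum>w\<in>players n - {u}. ereal_of_enat (gdist (players n) (game_edge s) u w)) = \<infinity>"
      using fin_players v \<open>u \<noteq> v\<close> inf by (subst sum_Pinfty) auto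
    then show ?thesis unfolding player_cost_def by simp
  qed
  have c2: "player_cost n \<alpha> s' u \<noteq> \<infinity>"
  proof -
    have "\<forall>w\<in>players n - {u}. gdist (players n) (game_edge s') u w \<le> enat 1"
    proof
      fix w assume w: "w \<in> players n - {u}"
      have "(u,w) \<in> edge_rel (players n) (game_edge s')"
        using w u unfolding edge_rel_def game_edge_def s'_def t_def by auto
      then have "(u,w) \<in> edge_rel (players n) (game_edge s') ^^ 1" by simp
      then show "gdist (players n) (game_edge s') u w \<le> enat 1" by (rule gd_le)
    qed
    note h1 = this
    have "\<forall>w\<in>players n - {u}. ereal_of_enat (gdist (players n) (game_edge s') u w) \<noteq> \<infinity>"
    proof
      fix w assume "w \<in> players n - {u}"
      then have "gdist (players n) (game_edge s') u w \<le> enat 1" using h1 by blast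
      then have "gdist (players n) (game_edge s') u w \<noteq> \<infinity>" by (cases "gdist (players n) (game_edge s') u w") auto
      then show "ereal_of_enat (gdist (players n) (game_edge s') u w) \<noteq> \<infinity>" by simp
    qed
    then have "(\<Sum>w\<in>players n - {u}. ereal_of_enat (gdist (players n) (game_edge s') u w)) \<noteq> \<infinity>"
      by (simp add: sum_Pinfty)
    then show ?thesis unfolding player_cost_def by simp
  qed
  have "t \<subseteq> players n - {u}" by (simp add: t_def)
  then have "player_cost n \<alpha> s u \<le> player_cost n \<alpha> (s(u := t)) u"
    using ne u unfolding nash_equilibrium_def by blast
  then show False using c1 c2 s'_def by simp
qed

definition dd :: "nat \<Rightarrow> (nat \<Rightarrow> nat set) \<Rightarrow> nat \<Rightarrow> nat \<Rightarrow> nat" where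
  "dd n s u v = the_enat (gdist (players n) (game_edge s) u v)"

lemma dd_eq:
  assumes "nash_equilibrium n \<alpha> s" "u \<in> players n" "v \<in> players n"
  shows "gdist (players n) (game_edge s) u v = enat (dd n s u v)"
  using NE_conn[OF assms] unfolding dd_def by auto

lemma dd_sym: "dd n s u v = dd n s v u"
  unfolding dd_def using gd_sym[of "game_edge s", OF ge_sym] by metis

lemma dd_refl: "dd n s u u = 0"
  unfolding dd_def gd_refl by (simp add: zero_enat_def)


lemma gain:
  assumes ne: "nash_equilibrium n \<alpha> s" and ap: "\<alpha> > 0"
    and u: "u \<in> players n" and c: "c \<in> players n"
  shows "real (card {z\<in>players n. dd n s c z + 2 \<le> dd n s u z}) \<le> \<alpha>"
proof (cases "c = u")
  case True then show ?thesis using ap by simp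
next
  case False
  define V where "V = players n"
  define t where "t = insert c (s u)"
  define s' where "s' = s(u := t)"
  define S where "S = {z\<in>V. dd n s c z + 2 \<le> dd n s u z}"
  have fin: "finite V" unfolding V_def by (rule fin_players)
  have vp: "s u \<subseteq> V - {u}" using ne u unfolding nash_equilibrium_def valid_profile_def V_def by blast
  have tsub: "t \<subseteq> V - {u}" using vp c False unfolding t_def V_def by auto
  have finsu: "finite (s u)" using vp fin finite_subset by blast
  have cardt: "card t \<le> card (s u) + 1" unfolding t_def using card_insert_le_m1 finsu
    by (simp add: card_insert_if)
  have le: "player_cost n \<alpha> s u \<le> player_cost n \<alpha> s' u"
    using ne u tsub unfolding nash_equilibrium_def s'_def V_def by blast
  have mono: "\<And>x y. game_edge s x y \<Longrightarrow> game_edge s' x y"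
    unfolding game_edge_def s'_def t_def by auto
  have uc: "(u,c) \<in> edge_rel V (game_edge s')"
    using u c unfolding edge_rel_def game_edge_def s'_def t_def V_def by auto
  define g where "g z = min (dd n s u z) (Suc (dd n s c z))" for z
  have gle: "gdist V (game_edge s') u z \<le> enat (g z)" if z: "z \<in> V" for z
  proof -
    have a: "gdist V (game_edge s') u z \<le> enat (dd n s u z)"
    proof -
      have "gdist V (game_edge s) u z = enat (dd n s u z)" using dd_eq[OF ne u] z V_def by simp
      then show ?thesis using gd_mono[where E="game_edge s" and E'="game_edge s'", OF mono] by simp
    qed
    have b: "gdist V (game_edge s') c z \<le> enat (dd n s c z)"
    proof -
      have "gdist V (game_edge s) c z = enat (dd n s c z)" using dd_eq[OF ne c] z V_def by simp
      then show ?thesis using gd_mono[where E="game_edge s" and E'="game_edge s'", OF mono] by simp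
    qed
    have b2: "gdist V (game_edge s') u z \<le> enat (Suc (dd n s c z))"
      by (rule gd_step[OF uc b])
    show ?thesis using a b2 unfolding g_def by (simp add: min_def)
  qed
  have cost1: "player_cost n \<alpha> s u = ereal (\<alpha> * real (card (s u)) + (\<Sum>z\<in>V-{u}. real (dd n s u z)))"
  proof -
    have "(\<Sum>z\<in>V-{u}. ereal_of_enat (gdist (players n) (game_edge s) u z)) = (\<Sum>z\<in>V-{u}. ereal (real (dd n s u z)))"
      using dd_eq[OF ne u] unfolding V_def by (intro sum.cong) auto
    then show ?thesis unfolding player_cost_def V_def by simp
  qed
  have cost2: "player_cost n \<alpha> s' u \<le> ereal (\<alpha> * real (card (s u) + 1) + (\<Sum>z\<in>V-{u}. real (g z)))"
  proof -
    have "(\<Sum>z\<in>V-{u}. ereal_of_enat (gdist V (game_edge s') u z)) \<le> (\<Sum>z\<in>V-{u}. ereal (real (g z)))"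
    proof (rule sum_mono)
      fix z assume "z \<in> V - {u}"
      then have "gdist V (game_edge s') u z \<le> enat (g z)" using gle by blast
      then have "ereal_of_enat (gdist V (game_edge s') u z) \<le> ereal_of_enat (enat (g z))"
        by (metis ereal_of_enat_le_iff)
      then show "ereal_of_enat (gdist V (game_edge s') u z) \<le> ereal (real (g z))" by simp
    qed
    moreover have "\<alpha> * real (card t) \<le> \<alpha> * real (card (s u) + 1)"
      using cardt ap by (intro mult_left_mono) auto
    ultimately have "ereal (\<alpha> * real (card t)) + (\<Sum>z\<in>V-{u}. ereal_of_enat (gdist V (game_edge s') u z))
       \<le> ereal (\<alpha> * real (card (s u) + 1)) + ereal (\<Sum>z\<in>V-{u}. real (g z))"
      by (intro add_mono) auto
    then show ?thesis unfolding player_cost_def V_def s'_def by simp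
  qed
  have main: "(\<Sum>z\<in>V-{u}. real (dd n s u z)) \<le> \<alpha> + (\<Sum>z\<in>V-{u}. real (g z))"
  proof -
    have "ereal (\<alpha> * real (card (s u)) + (\<Sum>z\<in>V-{u}. real (dd n s u z))) \<le> ereal (\<alpha> * real (card (s u) + 1) + (\<Sum>z\<in>V-{u}. real (g z)))"
      using le cost1 cost2 by (metis order_trans)
    then have "\<alpha> * real (card (s u)) + (\<Sum>z\<in>V-{u}. real (dd n s u z)) \<le> \<alpha> * real (card (s u) + 1) + (\<Sum>z\<in>V-{u}. real (g z))"
      by simp
    then show ?thesis by (simp add: algebra_simps)
  qed
  have gle2: "real (g z) \<le> real (dd n s u z)" for z unfolding g_def by simp
  have Ssub: "S \<subseteq> V - {u}" unfolding S_def using dd_refl[of n s u] by auto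
  have "real (card S) = (\<Sum>z\<in>S. 1)" by simp
  also have "\<dots> \<le> (\<Sum>z\<in>S. real (dd n s u z) - real (g z))"
    by (rule sum_mono) (auto simp: S_def g_def)
  also have "\<dots> \<le> (\<Sum>z\<in>V-{u}. real (dd n s u z) - real (g z))"
    using Ssub fin gle2 by (intro sum_mono2) auto
  also have "\<dots> \<le> \<alpha>" using main by (simp add: sum_subtractf)
  finally show ?thesis unfolding S_def V_def .
qed


lemma card_filter_sum: "finite A \<Longrightarrow> card {x\<in>A. P x} = (\<Sum>x\<in>A. if P x then 1 else 0)"
  using sum.inter_filter[of A "\<lambda>_. 1::nat" P] by simp

lemma aux: "(a::real) < q \<Longrightarrow> x/5 - 4/5*q \<le> (x - 4*a)/5" by (simp add: field_simps)

lemma aux2: "(x::real) \<le> 5 * m \<Longrightarrow> x/5 \<le> m" by (simp add: field_simps)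

theorem proposition9:
  fixes C \<alpha> :: real and n :: nat and s :: "nat \<Rightarrow> nat set"
  assumes "C > 4"
    and "\<alpha> > 0"
    and "\<alpha> < real n / C"
    and "nash_equilibrium n \<alpha> s"
  shows "distance_almost_uniform (players n) (game_edge s) 5 (4/5 * (1 + 1/C))"
proof -
  define V where "V = players n"
  define d where "d = dd n s"
  note ne = assms(4)
  have fin: "finite V" unfolding V_def by (rule fin_players)
  have Cpos: "C > 0" using assms(1) by simp
  have npos: "n > 0"
  proof (rule ccontr)
    assume "\<not> n > 0" then have "n = 0" by simp
    then show False using assms(2,3) by simp
  qed
  have u0: "1 \<in> V" using npos by (simp add: V_def players_def)
  have cardV: "card V = n" by (simp add: V_def players_def)
  have dsym: "d a b = d b a" for a b unfolding d_def by (rule dd_sym)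
  define P where "P a b = {z\<in>V. d b z + 2 \<le> d a z \<or> d a z + 2 \<le> d b z}" for a b
  have Pc: "real (card (P a b)) \<le> 2*\<alpha>" if a: "a \<in> V" and b: "b \<in> V" for a b
  proof -
    have "P a b = {z\<in>V. d b z + 2 \<le> d a z} \<union> {z\<in>V. d a z + 2 \<le> d b z}"
      unfolding P_def by auto
    then have "card (P a b) \<le> card {z\<in>V. d b z + 2 \<le> d a z} + card {z\<in>V. d a z + 2 \<le> d b z}"
      by (simp add: card_Un_le)
    moreover have "real (card {z\<in>V. d b z + 2 \<le> d a z}) \<le> \<alpha>"
      using gain[OF ne assms(2)] a b unfolding V_def d_def by blast
    moreover have "real (card {z\<in>V. d a z + 2 \<le> d b z}) \<le> \<alpha>"
      using gain[OF ne assms(2)] a b unfolding V_def d_def by blast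
    ultimately show ?thesis by linarith
  qed
  define Q where "Q y z = (d y 1 + 2 \<le> d y z \<or> d y z + 2 \<le> d y 1)" for y z
  define W where "W y = {z\<in>V. Q y z}" for y
  have swap: "(\<Sum>y\<in>V. card (W y)) = (\<Sum>z\<in>V. card (P 1 z))"
  proof -
    have "(\<Sum>y\<in>V. card (W y)) = (\<Sum>y\<in>V. \<Sum>z\<in>V. if Q y z then 1 else 0)"
      unfolding W_def using fin by (simp add: card_filter_sum)
    also have "\<dots> = (\<Sum>z\<in>V. \<Sum>y\<in>V. if Q y z then 1 else 0)" by (rule sum.swap)
    also have "\<dots> = (\<Sum>z\<in>V. card (P 1 z))"
    proof (rule sum.cong[OF refl])
      fix z assume "z \<in> V"
      have "P 1 z = {y\<in>V. Q y z}" unfolding P_def Q_def using dsym by auto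
      then show "(\<Sum>y\<in>V. if Q y z then 1 else 0) = card (P 1 z)" using fin by (simp add: card_filter_sum)
    qed
    finally show ?thesis .
  qed
  have sumW: "(\<Sum>y\<in>V. real (card (W y))) \<le> (\<Sum>y\<in>V. 2*\<alpha>)"
  proof -
    have "(\<Sum>y\<in>V. real (card (W y))) = (\<Sum>z\<in>V. real (card (P 1 z)))"
      using swap by (metis of_nat_sum)
    also have "\<dots> \<le> (\<Sum>z\<in>V. 2*\<alpha>)" using Pc u0 by (intro sum_mono) auto
    finally show ?thesis .
  qed
  obtain c where c: "c \<in> V" "real (card (W c)) \<le> 2*\<alpha>"
  proof (rule ccontr)
    assume "\<not> thesis"
    then have "\<forall>y\<in>V. 2*\<alpha> < real (card (W y))" using that by force
    then have "(\<Sum>y\<in>V. 2*\<alpha>) < (\<Sum>y\<in>V. real (card (W y)))"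
      using fin u0 by (intro sum_strict_mono) auto
    then show False using sumW by linarith
  qed
  define r where "r = d c 1 - 2"
  have key: "real (card V) - 4*\<alpha> \<le> 5 * real (Max ((\<lambda>i. card (sphere V (game_edge s) (r+i) v)) ` {..<5}))"
    if v: "v \<in> V" for v
  proof -
    define M where "M = Max ((\<lambda>i. card (sphere V (game_edge s) (r+i) v)) ` {..<5})"
    define G where "G = {z\<in>V. r \<le> d v z \<and> d v z \<le> r+4}"
    have "V - G \<subseteq> W c \<union> P v c"
    proof
      fix z assume z: "z \<in> V - G"
      show "z \<in> W c \<union> P v c"
      proof (rule ccontr)
        assume "z \<notin> W c \<union> P v c"
        then have "\<not> (d c 1 + 2 \<le> d c z \<or> d c z + 2 \<le> d c 1)" "\<not> (d c z + 2 \<le> d v z \<or> d v z + 2 \<le> d c z)"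
          using z unfolding W_def Q_def P_def by auto
        then have "r \<le> d v z \<and> d v z \<le> r+4" unfolding r_def by arith
        then show False using z unfolding G_def by auto
      qed
    qed
    then have "card (V - G) \<le> card (W c \<union> P v c)"
      using fin by (intro card_mono) (auto simp: W_def P_def)
    also have "\<dots> \<le> card (W c) + card (P v c)" by (rule card_Un_le)
    finally have cb: "real (card (V - G)) \<le> 4*\<alpha>" using c Pc[OF v c(1)] by linarith
    have GV: "G \<subseteq> V" unfolding G_def by auto
    have cV: "card V = card G + card (V - G)"
      using card_Diff_subset[OF finite_subset[OF GV fin] GV] card_mono[OF fin GV] by simp
    have Gsub: "G \<subseteq> (\<Union>i\<in>{..<5::nat}. sphere V (game_edge s) (r+i) v)"
    proof
      fix z assume z: "z \<in> G"
      then have zV: "z \<in> V" and rz: "r \<le> d v z" "d v z \<le> r + 4" unfolding G_def by auto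
      have "gdist V (game_edge s) v z = enat (d v z)"
        using dd_eq[OF ne] v zV unfolding V_def d_def by blast
      then have "z \<in> sphere V (game_edge s) (r + (d v z - r)) v"
        using zV rz unfolding sphere_def by simp
      moreover have "d v z - r \<in> {..<5}" using rz by auto
      ultimately show "z \<in> (\<Union>i\<in>{..<5::nat}. sphere V (game_edge s) (r+i) v)" by blast
    qed
    have "card G \<le> card (\<Union>i\<in>{..<5::nat}. sphere V (game_edge s) (r+i) v)"
      using fin Gsub by (intro card_mono) (auto simp: sphere_def)
    also have "\<dots> \<le> (\<Sum>i<5. card (sphere V (game_edge s) (r+i) v))" by (rule card_UN_le) simp
    also have "\<dots> \<le> (\<Sum>i<(5::nat). M)" unfolding M_def by (intro sum_mono Max_ge) auto
    also have "\<dots> = 5 * M" by simp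
    finally have "card G \<le> 5 * M" .
    then have "real (card G) \<le> 5 * real M" by linarith
    then show ?thesis using cV cb unfolding M_def by linarith
  qed
  show ?thesis unfolding distance_almost_uniform_def
  proof (intro exI ballI)
    fix v assume "v \<in> players n"
    then have vV: "v \<in> V" unfolding V_def .
    have k: "real n - 4*\<alpha> \<le> 5 * real (Max ((\<lambda>i. card (sphere V (game_edge s) (r+i) v)) ` {..<5}))"
      using key[OF vV] unfolding cardV .
    have eq: "real n * (1 - 4/5*(1+1/C)) = real n/5 - 4/5*(real n/C)"
      using Cpos by (simp add: field_simps)
    show "real (card (players n)) * (1 - 4/5*(1+1/C)) \<le> real (Max ((\<lambda>i. card (sphere (players n) (game_edge s) (r+i) v)) ` {..<5}))"
    proof -
      have cn: "real (card (players n)) = real n" using cardV V_def by simp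
      have h1: "real n * (1 - 4/5*(1+1/C)) \<le> (real n - 4*\<alpha>)/5" unfolding eq using aux[OF assms(3)] .
      have h2: "(real n - 4*\<alpha>)/5 \<le> real (Max ((\<lambda>i. card (sphere (players n) (game_edge s) (r+i) v)) ` {..<5}))"
        using aux2 k unfolding V_def by blast
      show ?thesis unfolding cn using h1 h2 by (rule order_trans)
    qed
  qed
qed

end
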